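(* Let $\mathcal A$ be finite, $r,\hat r:\mathcal A\to[0,1]$, $\eta>0$, and $\pi^{\mathrm{ref}}\in\Delta(\mathcal A)$ with $\pi^{\mathrm{ref}}(a)>0$ for all $a$. Suppose $\hat\pi\in\arg\max_{\pi\in\Delta(\mathcal A)}J(\pi;\hat r)$. Then there exists $\bar u\in[0,1]$ such that $$\mathrm{SubOpt}(\hat\pi)=\frac\eta2\left(\mathbb E_{a\sim\pi_{\bar u}}\Big[\frac{\pi_{\bar u}(a)}{\pi^{\mathrm{ref}}(a)}(r(a)-\hat r(a))^2\Big]-\frac{\Big(\sum_a\frac{\pi_{\bar u}(a)^2}{\pi^{\mathrm{ref}}(a)}(r(a)-\hat r(a))\Big)^2}{\sum_a\frac{\pi_{\bar u}(a)^2}{\pi^{\mathrm{ref}}(a)}}\right),$$ where $\pi_{\bar u}$ is the maximizer of $J(\cdot;r_{\bar u})$ over $\Delta(\mathcal A)$ with $r_{\bar u}=(1-\bar u)r+\bar u\hat r$. In particular, $$\mathrm{SubOpt}(\hat\pi)\le\frac\eta2\,\mathbb E_{a\sim\pi_{\bar u}}\Big[\frac{\pi_{\bar u}(a)}{\pi^{\mathrm{ref}}(a)}(r(a)-\hat r(a))^2\Big].$$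
   Context: For $f:\mathcal A\to\mathbb R$, $J(\pi;f)=\sum_af(a)\pi(a)-\eta^{-1}\mathrm{KL}(\pi^{\mathrm{ref}}\|\pi)$, where $\mathrm{KL}(P\|Q)=\sum_aP(a)\log(P(a)/Q(a))$. $\pi^*$ is the (unique) maximizer of $J(\cdot;r)$ over $\Delta(\mathcal A)$, and $\mathrm{SubOpt}(\pi)=J(\pi^*;r)-J(\pi;r)$. *)

theory Defs
  imports "HOL-Analysis.Analysis"
begin

definition policy_simplex :: "('a::finite \<Rightarrow> real) set" where
  "policy_simplex = {p. (\<forall>a. 0 \<le> p a) \<and> (\<Sum>a\<in>UNIV. p a) = 1}"

(* KL(P||Q) = sum_a P a log(P a / Q a), with 0 log 0 = 0 and value +infinity
   if some P a > 0 while Q a = 0. *)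
definition KL :: "('a::finite \<Rightarrow> real) \<Rightarrow> ('a \<Rightarrow> real) \<Rightarrow> ereal" where
  "KL P Q = (if (\<exists>a. 0 < P a \<and> Q a = 0) then \<infinity>
             else ereal (\<Sum>a\<in>UNIV. P a * ln (P a / Q a)))"

definition J :: "real \<Rightarrow> ('a::finite \<Rightarrow> real) \<Rightarrow> ('a \<Rightarrow> real) \<Rightarrow> ('a \<Rightarrow> real) \<Rightarrow> ereal" where
  "J \<eta> \<pi>ref \<pi> f = ereal (\<Sum>a\<in>UNIV. f a * \<pi> a) - ereal (1 / \<eta>) * KL \<pi>ref \<pi>"

definition is_maximizer :: "real \<Rightarrow> ('a::finite \<Rightarrow> real) \<Rightarrow> ('a \<Rightarrow> real) \<Rightarrow> ('a \<Rightarrow> real) \<Rightarrow> bool" where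
  "is_maximizer \<eta> \<pi>ref f \<pi> \<longleftrightarrow> \<pi> \<in> policy_simplex \<and> (\<forall>\<pi>'\<in>policy_simplex. J \<eta> \<pi>ref \<pi>' f \<le> J \<eta> \<pi>ref \<pi> f)"

definition opt_policy :: "real \<Rightarrow> ('a::finite \<Rightarrow> real) \<Rightarrow> ('a \<Rightarrow> real) \<Rightarrow> ('a \<Rightarrow> real)" where
  "opt_policy \<eta> \<pi>ref f = (THE \<pi>. is_maximizer \<eta> \<pi>ref f \<pi>)"

definition SubOpt :: "real \<Rightarrow> ('a::finite \<Rightarrow> real) \<Rightarrow> ('a \<Rightarrow> real) \<Rightarrow> ('a \<Rightarrow> real) \<Rightarrow> ereal" where
  "SubOpt \<eta> \<pi>ref r \<pi> = J \<eta> \<pi>ref (opt_policy \<eta> \<pi>ref r) r - J \<eta> \<pi>ref \<pi> r"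

end

theory Submission imports Defs begin

lemma exists_lam:
  fixes f \<pi>ref :: "'a::finite \<Rightarrow> real" and \<eta> :: real
  assumes eta: "\<eta> > 0" and pos: "\<forall>a. \<pi>ref a > 0" and s1: "(\<Sum>a\<in>UNIV. \<pi>ref a) = 1"
  shows "\<exists>l. (\<forall>a. f a < l) \<and> (\<Sum>a\<in>UNIV. \<pi>ref a / (\<eta> * (l - f a))) = 1"
proof -
  define M where "M = Max (range f)"
  have "M \<in> range f" unfolding M_def by (rule Max_in) auto
  then obtain b where b: "f b = M" by auto
  have fM: "f a \<le> M" for a unfolding M_def by simp
  define h where "h l = (\<Sum>a\<in>UNIV. \<pi>ref a / (\<eta> * (l - f a)))" for l
  define lo where "lo = M + \<pi>ref b / \<eta>"
  define hi where "hi = M + 1 / \<eta>"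
  have pb1: "\<pi>ref b \<le> 1" using member_le_sum[of b UNIV \<pi>ref] pos s1 by (simp add: less_imp_le)
  have lohi: "lo \<le> hi" unfolding lo_def hi_def using pb1 eta by (simp add: divide_right_mono)
  have lopos: "lo > M" unfolding lo_def using pos eta by simp
  have "h lo \<ge> 1"
  proof -
    have "h lo \<ge> \<pi>ref b / (\<eta> * (lo - f b))" unfolding h_def
    proof (rule member_le_sum)
      fix x
      have "f x < lo" using fM[of x] lopos by linarith
      then show "0 \<le> \<pi>ref x / (\<eta> * (lo - f x))" using pos[rule_format, of x] eta
        by (intro divide_nonneg_pos mult_pos_pos) auto
    qed auto
    also have "\<pi>ref b / (\<eta> * (lo - f b)) = 1" unfolding lo_def b using pos[rule_format, of b] eta
      by simp
    finally show ?thesis .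
  qed
  moreover have "h hi \<le> 1"
  proof -
    have "h hi \<le> (\<Sum>a\<in>UNIV. \<pi>ref a)" unfolding h_def
    proof (rule sum_mono)
      fix a
      have "hi - f a \<ge> 1/\<eta>" unfolding hi_def using fM[of a] by simp
      then have "\<eta> * (hi - f a) \<ge> \<eta> * (1/\<eta>)" using eta by (intro mult_left_mono) auto
      then have "\<eta> * (hi - f a) \<ge> 1" using eta by simp
      then show "\<pi>ref a / (\<eta> * (hi - f a)) \<le> \<pi>ref a"
        using pos[rule_format, of a] by (simp add: divide_le_eq mult_le_cancel_left1)
    qed
    then show ?thesis using s1 by simp
  qed
  moreover have "\<forall>x. lo \<le> x \<and> x \<le> hi \<longrightarrow> isCont h x"
  proof (intro allI impI)
    fix x assume "lo \<le> x \<and> x \<le> hi"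
    then have "x > M" using lopos by simp
    then have "\<eta> * (x - f a) \<noteq> 0" for a using fM[of a] eta by simp
    then show "isCont h x" unfolding h_def by (intro continuous_intros) auto
  qed
  ultimately obtain l where "lo \<le> l" "h l = 1" using IVT2[of h hi 1 lo] lohi by auto
  then show ?thesis using lopos fM unfolding h_def by (intro exI[of _ l]) (smt (verit))
qed

lemma J_pos:
  fixes f \<pi>ref \<pi> :: "'a::finite \<Rightarrow> real"
  assumes "\<forall>a. \<pi> a > 0"
  shows "J \<eta> \<pi>ref \<pi> f = ereal ((\<Sum>a\<in>UNIV. f a * \<pi> a) - (1/\<eta>) * (\<Sum>a\<in>UNIV. \<pi>ref a * ln (\<pi>ref a / \<pi> a)))"
proof -
  have "\<not> (\<exists>a. 0 < \<pi>ref a \<and> \<pi> a = 0)" using assms by (metis less_irrefl)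
  then show ?thesis unfolding J_def KL_def by simp
qed

lemma J_zero:
  fixes f \<pi>ref \<pi> :: "'a::finite \<Rightarrow> real"
  assumes "\<pi> a = 0" "\<pi>ref a > 0" "\<eta> > 0"
  shows "J \<eta> \<pi>ref \<pi> f = -\<infinity>"
proof -
  have "KL \<pi>ref \<pi> = \<infinity>" unfolding KL_def using assms by auto
  then show ?thesis unfolding J_def using assms by simp
qed

lemma aux_lin:
  fixes \<eta> S A B C E l :: real
  assumes "\<eta> > 0" "S = C - B - (\<eta> * (l - A) - 1)" "E = l - 1/\<eta>"
  shows "(A - (1/\<eta>)*B) - (E - (1/\<eta>)*C) = (1/\<eta>)*S"
  unfolding assms(2,3) using assms(1) by (simp add: field_simps)

lemma gibbs_char:
  fixes f \<pi>ref \<pi> :: "'a::finite \<Rightarrow> real" and \<eta> l :: real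
  assumes eta: "\<eta> > 0" and pos: "\<forall>a. \<pi>ref a > 0" and s1: "(\<Sum>a\<in>UNIV. \<pi>ref a) = 1"
    and fl: "\<forall>a. f a < l" and sl: "(\<Sum>a\<in>UNIV. \<pi>ref a / (\<eta> * (l - f a))) = 1"
    and pdef: "\<pi> = (\<lambda>a. \<pi>ref a / (\<eta> * (l - f a)))"
  shows "is_maximizer \<eta> \<pi>ref f \<pi>' \<longleftrightarrow> \<pi>' = \<pi>"
proof -
  have ppos: "\<pi> a > 0" for a unfolding pdef using pos eta fl
    by (intro divide_pos_pos mult_pos_pos) (auto simp: algebra_simps)
  have psum: "(\<Sum>a\<in>UNIV. \<pi> a) = 1" using sl pdef by simp
  have psimp: "\<pi> \<in> policy_simplex" unfolding policy_simplex_def using ppos psum by (auto intro: less_imp_le)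
  have e1: "\<pi>ref a / (\<eta> * \<pi> a) = l - f a" for a
    unfolding pdef using pos[rule_format, of a] eta fl[rule_format, of a] by (simp add: field_simps)
  have e3: "(\<Sum>a\<in>UNIV. f a * \<pi> a) = l - 1/\<eta>"
  proof -
    have "(\<Sum>a\<in>UNIV. (l - f a) * \<pi> a) = (\<Sum>a\<in>UNIV. \<pi>ref a / \<eta>)"
    proof (rule sum.cong)
      fix a
      have "(l - f a) * \<pi> a = \<pi>ref a / (\<eta> * \<pi> a) * \<pi> a" unfolding e1 ..
      also have "\<dots> = \<pi>ref a / \<eta>" using ppos[of a] eta by simp
      finally show "(l - f a) * \<pi> a = \<pi>ref a / \<eta>" .
    qed simp
    also have "\<dots> = 1/\<eta>" using s1 by (simp add: sum_divide_distrib[symmetric])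
    finally have "(\<Sum>a\<in>UNIV. (l - f a) * \<pi> a) = 1/\<eta>" .
    moreover have "(\<Sum>a\<in>UNIV. (l - f a) * \<pi> a) = l - (\<Sum>a\<in>UNIV. f a * \<pi> a)"
      using psum by (simp add: left_diff_distrib sum_subtractf sum_distrib_left[symmetric])
    ultimately show ?thesis by linarith
  qed
  have key: "((\<Sum>a\<in>UNIV. f a * q a) - (1/\<eta>) * (\<Sum>a\<in>UNIV. \<pi>ref a * ln (\<pi>ref a / q a)))
      - ((\<Sum>a\<in>UNIV. f a * \<pi> a) - (1/\<eta>) * (\<Sum>a\<in>UNIV. \<pi>ref a * ln (\<pi>ref a / \<pi> a)))
      = (1/\<eta>) * (\<Sum>a\<in>UNIV. \<pi>ref a * (ln (q a / \<pi> a) - (q a / \<pi> a - 1)))"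
    if qpos: "\<forall>a. q a > 0" and qs: "(\<Sum>a\<in>UNIV. q a) = 1" for q
  proof -
    have l1: "\<pi>ref a * ln (\<pi>ref a / \<pi> a) - \<pi>ref a * ln (\<pi>ref a / q a) = \<pi>ref a * ln (q a / \<pi> a)" for a
      using pos[rule_format, of a] qpos[rule_format, of a] ppos[of a]
      by (simp add: ln_div right_diff_distrib)
    have l2: "\<pi>ref a * (q a / \<pi> a - 1) = \<eta> * ((l - f a) * q a) - \<pi>ref a" for a
    proof -
      have "\<pi>ref a * (q a / \<pi> a) = \<eta> * (\<pi>ref a / (\<eta> * \<pi> a)) * q a" using eta ppos[of a] by simp
      then show ?thesis unfolding e1 by (simp add: right_diff_distrib)
    qed
    have s2: "(\<Sum>a\<in>UNIV. \<pi>ref a * (q a / \<pi> a - 1)) = \<eta> * (l - (\<Sum>a\<in>UNIV. f a * q a)) - 1"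
      unfolding l2 using qs s1
      by (simp add: sum_subtractf sum_distrib_left[symmetric] left_diff_distrib sum_distrib_right[symmetric])
    have "(\<Sum>a\<in>UNIV. \<pi>ref a * (ln (q a / \<pi> a) - (q a / \<pi> a - 1)))
        = (\<Sum>a\<in>UNIV. \<pi>ref a * ln (\<pi>ref a / \<pi> a)) - (\<Sum>a\<in>UNIV. \<pi>ref a * ln (\<pi>ref a / q a))
          - (\<eta> * (l - (\<Sum>a\<in>UNIV. f a * q a)) - 1)"
      unfolding s2[symmetric] sum_subtractf[symmetric] l1 by (simp add: right_diff_distrib sum_subtractf)
    then show ?thesis using aux_lin[OF eta _ e3] by blast
  qed
  have termle: "\<pi>ref a * (ln (q a / \<pi> a) - (q a / \<pi> a - 1)) \<le> 0" if "q a > 0" for q a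
    using ln_le_minus_one[of "q a / \<pi> a"] that ppos[of a] pos[rule_format, of a]
    by (simp add: mult_nonneg_nonpos)
  have Jle: "J \<eta> \<pi>ref q f \<le> J \<eta> \<pi>ref \<pi> f" if "q \<in> policy_simplex" for q
  proof (cases "\<forall>a. q a > 0")
    case True
    have qs: "(\<Sum>a\<in>UNIV. q a) = 1" using that unfolding policy_simplex_def by auto
    have "(\<Sum>a\<in>UNIV. \<pi>ref a * (ln (q a / \<pi> a) - (q a / \<pi> a - 1))) \<le> 0"
      by (rule sum_nonpos) (use termle True in auto)
    then have "(1/\<eta>) * (\<Sum>a\<in>UNIV. \<pi>ref a * (ln (q a / \<pi> a) - (q a / \<pi> a - 1))) \<le> 0"
      using eta by (simp add: divide_nonpos_pos)
    then show ?thesis unfolding J_pos[OF True] J_pos[OF allI[OF ppos]] using key[OF True qs] by simp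
  next
    case False
    then obtain a where "q a \<le> 0" by (auto simp: not_less)
    then have "q a = 0" using that unfolding policy_simplex_def by (auto intro: antisym)
    then show ?thesis using J_zero[of q a \<pi>ref \<eta> f] pos eta by simp
  qed
  show ?thesis
  proof
    assume m: "is_maximizer \<eta> \<pi>ref f \<pi>'"
    then have qs: "\<pi>' \<in> policy_simplex" and ge: "J \<eta> \<pi>ref \<pi> f \<le> J \<eta> \<pi>ref \<pi>' f"
      unfolding is_maximizer_def using psimp by auto
    have qpos: "\<forall>a. \<pi>' a > 0"
    proof (rule ccontr)
      assume "\<not> (\<forall>a. \<pi>' a > 0)"
      then obtain a where "\<pi>' a \<le> 0" by (auto simp: not_less)
      then have "\<pi>' a = 0" using qs unfolding policy_simplex_def by (auto intro: antisym)
      then have "J \<eta> \<pi>ref \<pi>' f = -\<infinity>" using J_zero[of \<pi>' a \<pi>ref \<eta> f] pos eta by simp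
      then show False using ge unfolding J_pos[OF allI[OF ppos]] by simp
    qed
    have qs1: "(\<Sum>a\<in>UNIV. \<pi>' a) = 1" using qs unfolding policy_simplex_def by auto
    have "0 \<le> (1/\<eta>) * (\<Sum>a\<in>UNIV. \<pi>ref a * (ln (\<pi>' a / \<pi> a) - (\<pi>' a / \<pi> a - 1)))"
      using ge unfolding J_pos[OF qpos] J_pos[OF allI[OF ppos]] key[OF qpos qs1, symmetric] by simp
    then have c1: "0 \<le> (\<Sum>a\<in>UNIV. \<pi>ref a * (ln (\<pi>' a / \<pi> a) - (\<pi>' a / \<pi> a - 1)))"
      using eta by (simp add: zero_le_divide_iff)
    have c2: "\<forall>a\<in>UNIV. \<pi>ref a * (ln (\<pi>' a / \<pi> a) - (\<pi>' a / \<pi> a - 1)) \<le> 0"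
      using termle qpos by auto
    have z: "\<forall>a\<in>UNIV. \<pi>ref a * (ln (\<pi>' a / \<pi> a) - (\<pi>' a / \<pi> a - 1)) = 0"
    proof -
      let ?g = "\<lambda>a. - (\<pi>ref a * (ln (\<pi>' a / \<pi> a) - (\<pi>' a / \<pi> a - 1)))"
      have "sum ?g UNIV = 0" using c1 c2 by (simp add: sum_negf) (meson antisym sum_nonpos)
      moreover have "\<forall>a\<in>UNIV. ?g a \<ge> 0" using c2 by auto
      ultimately show ?thesis using sum_nonneg_eq_0_iff[of UNIV ?g] by auto
    qed
    show "\<pi>' = \<pi>"
    proof
      fix a
      have "\<pi>ref a * (ln (\<pi>' a / \<pi> a) - (\<pi>' a / \<pi> a - 1)) = 0" using z by blast
      then have "ln (\<pi>' a / \<pi> a) = \<pi>' a / \<pi> a - 1" using pos[rule_format, of a] by simp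
      then have "\<pi>' a / \<pi> a = 1" using ln_eq_minus_one[of "\<pi>' a / \<pi> a"] qpos[rule_format, of a] ppos[of a] by simp
      then show "\<pi>' a = \<pi> a" using ppos[of a] by (simp add: divide_eq_1_iff)
    qed
  next
    assume "\<pi>' = \<pi>"
    then show "is_maximizer \<eta> \<pi>ref f \<pi>'" unfolding is_maximizer_def using psimp Jle by auto
  qed
qed

lemma opt_char:
  fixes f \<pi>ref :: "'a::finite \<Rightarrow> real" and \<eta> :: real
  assumes eta: "\<eta> > 0" and pos: "\<forall>a. \<pi>ref a > 0" and s1: "(\<Sum>a\<in>UNIV. \<pi>ref a) = 1"
  shows "\<exists>l. (\<forall>a. f a < l) \<and> opt_policy \<eta> \<pi>ref f = (\<lambda>a. \<pi>ref a / (\<eta> * (l - f a)))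
     \<and> (\<forall>q. is_maximizer \<eta> \<pi>ref f q \<longleftrightarrow> q = opt_policy \<eta> \<pi>ref f)"
proof -
  obtain l where l: "\<forall>a. f a < l" "(\<Sum>a\<in>UNIV. \<pi>ref a / (\<eta> * (l - f a))) = 1"
    using exists_lam[OF eta pos s1] by blast
  note ch = gibbs_char[OF eta pos s1 l refl]
  have "opt_policy \<eta> \<pi>ref f = (\<lambda>a. \<pi>ref a / (\<eta> * (l - f a)))"
    unfolding opt_policy_def using ch by (intro the_equality) auto
  then show ?thesis using l ch by auto
qed

lemma aux_I2:
  fixes x y c e :: real
  assumes "x > 0" "y > 0" "e > 0" "c > 0"
  shows "x - y = - (x * y * e / c) * (c / (e * x) - c / (e * y))"
  using assms by (simp add: field_simps)

lemma aux_I1: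
  fixes a b S T :: real
  assumes "a * S = b * T" "S > 0"
  shows "a = b * (T / S)"
  using assms by (simp add: field_simps)

lemma aux_neg:
  fixes x y z :: real
  shows "- x * (y - z) = x * (z - y)"
  by (simp add: algebra_simps)

lemma aux_A:
  fixes p e c g h :: real
  assumes "c \<noteq> 0"
  shows "p^2 * e / c * (h - g) * (h - g) = e * (p * (p / c * (g - h)^2))"
  using assms by (simp add: power2_eq_square field_simps)

lemma aux_B:
  fixes p e c g h :: real
  assumes "c \<noteq> 0"
  shows "p^2 * e / c * (h - g) = - (e * (p^2 / c * (g - h)))"
  using assms by (simp add: power2_eq_square field_simps)

lemma deriv_P:
  fixes P :: "real \<Rightarrow> 'a::finite \<Rightarrow> real" and lam :: "real \<Rightarrow> real"
    and \<pi>ref r d :: "'a \<Rightarrow> real" and \<eta> u0 :: real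
  assumes eta: "\<eta> > 0" and pos: "\<forall>a. \<pi>ref a > 0"
    and Psum: "\<forall>u. (\<Sum>a\<in>UNIV. P u a) = 1"
    and lt: "\<forall>u a. r a + u * d a < lam u"
    and Pf: "\<forall>u a. P u a = \<pi>ref a / (\<eta> * (lam u - (r a + u * d a)))"
  shows "DERIV (\<lambda>u. P u a) u0 :> (P u0 a ^ 2 * \<eta> / \<pi>ref a) *
     (d a - (\<Sum>b\<in>UNIV. (P u0 b ^ 2 * \<eta> / \<pi>ref b) * d b) / (\<Sum>b\<in>UNIV. P u0 b ^ 2 * \<eta> / \<pi>ref b))"
proof -
  have Ppos: "P u b > 0" for u b unfolding Pf[rule_format] using pos eta lt
    by (intro divide_pos_pos mult_pos_pos) (auto simp: algebra_simps)
  have Ple1: "P u b \<le> 1" for u b using member_le_sum[of b UNIV "P u"] Ppos Psum by (simp add: less_imp_le)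
  define q where "q z b = P z b * P u0 b * \<eta> / \<pi>ref b" for z b
  define R where "R z = (\<Sum>b\<in>UNIV. q z b * d b) / (\<Sum>b\<in>UNIV. q z b)" for z
  have qpos: "q z b > 0" for z b unfolding q_def using Ppos pos eta by simp
  have sqpos: "(\<Sum>b\<in>UNIV. q z b) > 0" for z using qpos by (simp add: sum_pos)
  have X: "lam u - (r b + u * d b) = \<pi>ref b / (\<eta> * P u b)" for u b
    using Pf[rule_format, of u b] lt[rule_format, of b u] eta pos[rule_format, of b] by (simp add: field_simps)
  have I2: "P z b - P u0 b = - q z b * ((lam z - lam u0) - (z - u0) * d b)" for z b
  proof -
    have "(lam z - lam u0) - (z - u0) * d b = (lam z - (r b + z * d b)) - (lam u0 - (r b + u0 * d b))"
      by (simp add: algebra_simps)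
    also have "\<dots> = \<pi>ref b / (\<eta> * P z b) - \<pi>ref b / (\<eta> * P u0 b)" unfolding X ..
    finally have e: "(lam z - lam u0) - (z - u0) * d b = \<pi>ref b / (\<eta> * P z b) - \<pi>ref b / (\<eta> * P u0 b)" .
    show ?thesis unfolding e q_def using Ppos[of z b] Ppos[of u0 b] eta pos[rule_format, of b]
      by (intro aux_I2) auto
  qed
  have I1: "lam z - lam u0 = (z - u0) * R z" for z
  proof -
    have "0 = (\<Sum>b\<in>UNIV. P z b - P u0 b)" using Psum by (simp add: sum_subtractf)
    also have "\<dots> = (\<Sum>b\<in>UNIV. - q z b * ((lam z - lam u0) - (z - u0) * d b))" using I2 by simp
    also have "\<dots> = (\<Sum>b\<in>UNIV. (z - u0) * (q z b * d b) - (lam z - lam u0) * q z b)"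
      by (rule sum.cong) (simp_all add: algebra_simps)
    also have "\<dots> = - ((lam z - lam u0) * (\<Sum>b\<in>UNIV. q z b) - (z - u0) * (\<Sum>b\<in>UNIV. q z b * d b))"
      by (simp add: sum_subtractf sum_distrib_left)
    finally have "(lam z - lam u0) * (\<Sum>b\<in>UNIV. q z b) = (z - u0) * (\<Sum>b\<in>UNIV. q z b * d b)" by simp
    then show ?thesis unfolding R_def using sqpos[of z] by (intro aux_I1) auto
  qed
  have I3: "P z b - P u0 b = (- q z b * (R z - d b)) * (z - u0)" for z b
    unfolding I2 I1 by (simp add: algebra_simps)
  define D where "D = (\<Sum>b\<in>UNIV. \<bar>d b\<bar>)"
  have dD: "\<bar>d b\<bar> \<le> D" for b unfolding D_def by (rule member_le_sum) simp_all
  have RD: "\<bar>R z\<bar> \<le> D" for z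
  proof -
    have "\<bar>\<Sum>b\<in>UNIV. q z b * d b\<bar> \<le> (\<Sum>b\<in>UNIV. \<bar>q z b * d b\<bar>)" by (rule sum_abs)
    also have "\<dots> \<le> (\<Sum>b\<in>UNIV. q z b * D)"
    proof (rule sum_mono)
      fix b
      have "\<bar>q z b * d b\<bar> = q z b * \<bar>d b\<bar>" using qpos[of z b] by (simp add: abs_mult)
      also have "\<dots> \<le> q z b * D" using qpos[of z b] dD[of b] by (intro mult_left_mono) auto
      finally show "\<bar>q z b * d b\<bar> \<le> q z b * D" .
    qed
    also have "\<dots> = D * (\<Sum>b\<in>UNIV. q z b)" unfolding sum_distrib_right[symmetric] by (rule mult.commute)
    finally have n: "\<bar>\<Sum>b\<in>UNIV. q z b * d b\<bar> \<le> D * (\<Sum>b\<in>UNIV. q z b)" .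
    have "\<bar>R z\<bar> = \<bar>\<Sum>b\<in>UNIV. q z b * d b\<bar> / (\<Sum>b\<in>UNIV. q z b)"
      unfolding R_def using abs_div_pos[OF sqpos[of z]] by (rule sym)
    also have "\<dots> \<le> D" unfolding pos_divide_le_eq[OF sqpos[of z]] using n by (simp add: mult.commute)
    finally show ?thesis .
  qed
  have Pcont: "isCont (\<lambda>z. P z b) u0" for b
  proof -
    define K where "K = (P u0 b * \<eta> / \<pi>ref b) * (D + \<bar>d b\<bar>)"
    have bnd: "norm (P z b - P u0 b) \<le> K * \<bar>z - u0\<bar>" for z
    proof -
      have "norm (P z b - P u0 b) = q z b * \<bar>R z - d b\<bar> * \<bar>z - u0\<bar>"
        unfolding I3 real_norm_def abs_mult abs_minus_cancel using qpos[of z b] by simp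
      also have "\<dots> \<le> K * \<bar>z - u0\<bar>" unfolding K_def
      proof (rule mult_right_mono)
        have c0: "P u0 b * \<eta> / \<pi>ref b \<ge> 0" using Ppos[of u0 b] eta pos[rule_format, of b] by simp
        have "q z b = P z b * (P u0 b * \<eta> / \<pi>ref b)" unfolding q_def by simp
        also have "\<dots> \<le> 1 * (P u0 b * \<eta> / \<pi>ref b)" by (rule mult_right_mono[OF Ple1 c0])
        finally have h1: "q z b \<le> P u0 b * \<eta> / \<pi>ref b" by simp
        have h2: "\<bar>R z - d b\<bar> \<le> D + \<bar>d b\<bar>" using RD[of z] by linarith
        show "q z b * \<bar>R z - d b\<bar> \<le> P u0 b * \<eta> / \<pi>ref b * (D + \<bar>d b\<bar>)"
          by (rule mult_mono[OF h1 h2 c0 abs_ge_zero])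
      qed simp
      finally show ?thesis .
    qed
    have "((\<lambda>z. P z b - P u0 b) \<longlongrightarrow> 0) (at u0)"
    proof (rule Lim_null_comparison)
      show "\<forall>\<^sub>F z in at u0. norm (P z b - P u0 b) \<le> K * \<bar>z - u0\<bar>"
        by (rule always_eventually) (use bnd in blast)
      have "((\<lambda>z. K * \<bar>z - u0\<bar>) \<longlongrightarrow> K * \<bar>u0 - u0\<bar>) (at u0)" by (intro tendsto_intros)
      then show "((\<lambda>z. K * \<bar>z - u0\<bar>) \<longlongrightarrow> 0) (at u0)" by simp
    qed
    then have "((\<lambda>z. P z b) \<longlongrightarrow> P u0 b) (at u0)" by (rule LIM_zero_cancel)
    then show ?thesis unfolding isCont_def .
  qed
  have qcont: "isCont (\<lambda>z. q z b) u0" for b unfolding q_def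
    using pos[rule_format, of b] by (intro continuous_intros Pcont) simp
  have c1: "isCont (\<lambda>z. \<Sum>b\<in>UNIV. q z b * d b) u0" by (intro continuous_intros qcont)
  have c2: "isCont (\<lambda>z. \<Sum>b\<in>UNIV. q z b) u0" by (intro continuous_intros qcont)
  have Rcont: "isCont R u0" unfolding R_def
    by (rule isCont_divide[OF c1 c2]) (use sqpos[of u0] in linarith)
  have "DERIV (\<lambda>u. P u a) u0 :> (- q u0 a * (R u0 - d a))"
    unfolding CARAT_DERIV
  proof (rule exI[of _ "\<lambda>z. - q z a * (R z - d a)"], intro conjI)
    show "\<forall>z. P z a - P u0 a = - q z a * (R z - d a) * (z - u0)" using I3 by blast
    show "isCont (\<lambda>z. - q z a * (R z - d a)) u0" by (intro continuous_intros qcont Rcont)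
  qed simp
  moreover have "- q u0 a * (R u0 - d a) = (P u0 a ^ 2 * \<eta> / \<pi>ref a) *
     (d a - (\<Sum>b\<in>UNIV. (P u0 b ^ 2 * \<eta> / \<pi>ref b) * d b) / (\<Sum>b\<in>UNIV. P u0 b ^ 2 * \<eta> / \<pi>ref b))"
  proof -
    have qe: "q u0 = (\<lambda>b. P u0 b ^ 2 * \<eta> / \<pi>ref b)" by (simp add: q_def power2_eq_square fun_eq_iff)
    show ?thesis unfolding R_def qe by (rule aux_neg)
  qed
  ultimately show ?thesis by simp
qed

theorem lemma5p2:
  fixes r rhat \<pi>ref \<pi>hat :: "'a::finite \<Rightarrow> real" and \<eta> :: real
  assumes "\<forall>a. 0 \<le> r a \<and> r a \<le> 1"
    and "\<forall>a. 0 \<le> rhat a \<and> rhat a \<le> 1"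
    and "\<eta> > 0"
    and "\<pi>ref \<in> policy_simplex"
    and "\<forall>a. \<pi>ref a > 0"
    and "is_maximizer \<eta> \<pi>ref rhat \<pi>hat"
  shows "\<exists>u\<in>{0..1::real}.
    (let p = opt_policy \<eta> \<pi>ref (\<lambda>a. (1 - u) * r a + u * rhat a) in
      SubOpt \<eta> \<pi>ref r \<pi>hat =
        ereal (\<eta> / 2 * ((\<Sum>a\<in>UNIV. p a * (p a / \<pi>ref a * (r a - rhat a)^2))
          - (\<Sum>a\<in>UNIV. p a ^ 2 / \<pi>ref a * (r a - rhat a))^2
            / (\<Sum>a\<in>UNIV. p a ^ 2 / \<pi>ref a)))
      \<and> SubOpt \<eta> \<pi>ref r \<pi>hat
          \<le> ereal (\<eta> / 2 * (\<Sum>a\<in>UNIV. p a * (p a / \<pi>ref a * (r a - rhat a)^2))))"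
proof -
  note a3 = assms(3) and a4 = assms(4) and a5 = assms(5) and a6 = assms(6)
  have eta: "\<eta> > 0" by (rule a3)
  have pos: "\<forall>a. \<pi>ref a > 0" by (rule a5)
  have s1: "(\<Sum>a\<in>UNIV. \<pi>ref a) = 1" using a4 unfolding policy_simplex_def by simp
  define d where "d a = rhat a - r a" for a
  define f where "f u = (\<lambda>a. (1 - u) * r a + u * rhat a)" for u
  have f_eq: "f u a = r a + u * d a" for u a by (simp add: f_def d_def algebra_simps)
  define P where "P u = opt_policy \<eta> \<pi>ref (f u)" for u
  have ex: "\<forall>u. \<exists>l. (\<forall>a. f u a < l) \<and> P u = (\<lambda>a. \<pi>ref a / (\<eta> * (l - f u a)))
        \<and> (\<forall>q. is_maximizer \<eta> \<pi>ref (f u) q \<longleftrightarrow> q = P u)"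
    unfolding P_def using opt_char[OF eta pos s1] by blast
  then obtain lam where lam: "\<forall>u. (\<forall>a. f u a < lam u) \<and> P u = (\<lambda>a. \<pi>ref a / (\<eta> * (lam u - f u a)))
        \<and> (\<forall>q. is_maximizer \<eta> \<pi>ref (f u) q \<longleftrightarrow> q = P u)"
    by (rule choice_iff[THEN iffD1, elim_format]) blast
  have lt: "\<forall>u a. r a + u * d a < lam u" using lam f_eq by metis
  have Pf: "\<forall>u a. P u a = \<pi>ref a / (\<eta> * (lam u - (r a + u * d a)))" using lam f_eq by metis
  have Pmax: "is_maximizer \<eta> \<pi>ref (f u) (P u)" for u using lam by blast
  have Psum: "\<forall>u. (\<Sum>a\<in>UNIV. P u a) = 1" using Pmax unfolding is_maximizer_def policy_simplex_def by blast
  have Ppos: "P u a > 0" for u a unfolding Pf[rule_format] using pos eta lt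
    by (intro divide_pos_pos mult_pos_pos) (auto simp: algebra_simps)
  have X: "\<pi>ref a / (\<eta> * P u a) = lam u - (r a + u * d a)" for u a
    using Pf[rule_format, of u a] lt[rule_format, of a u] eta pos[rule_format, of a] by (simp add: field_simps)
  define w where "w u a = P u a ^ 2 * \<eta> / \<pi>ref a" for u a
  define L where "L u = (\<Sum>b\<in>UNIV. w u b * d b) / (\<Sum>b\<in>UNIV. w u b)" for u
  define Pd where "Pd u a = w u a * (d a - L u)" for u a
  have wpos: "w u a > 0" for u a unfolding w_def using Ppos[of u a] eta pos[rule_format, of a] by simp
  have swpos: "(\<Sum>b\<in>UNIV. w u b) > 0" for u using wpos by (simp add: sum_pos)
  have dP: "DERIV (\<lambda>u. P u a) u0 :> Pd u0 a" for u0 a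
    using deriv_P[OF eta pos Psum lt Pf, of a u0] unfolding Pd_def w_def L_def .
  have sPd: "(\<Sum>a\<in>UNIV. Pd u a) = 0" for u
  proof -
    have "(\<Sum>a\<in>UNIV. Pd u a) = (\<Sum>a\<in>UNIV. w u a * d a) - L u * (\<Sum>a\<in>UNIV. w u a)"
      unfolding Pd_def by (simp add: right_diff_distrib sum_subtractf sum_distrib_left mult.commute)
    then show ?thesis unfolding L_def using swpos[of u] by simp
  qed
  define V where "V u = (\<Sum>a\<in>UNIV. d a * Pd u a)" for u
  define G where "G u = (\<Sum>a\<in>UNIV. r a * P u a) - (1/\<eta>) * (\<Sum>a\<in>UNIV. \<pi>ref a * (ln (\<pi>ref a) - ln (P u a)))" for u
  have JG: "J \<eta> \<pi>ref (P u) r = ereal (G u)" for u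
  proof -
    have "(\<Sum>a\<in>UNIV. \<pi>ref a * ln (\<pi>ref a / P u a)) = (\<Sum>a\<in>UNIV. \<pi>ref a * (ln (\<pi>ref a) - ln (P u a)))"
    proof (rule sum.cong)
      fix a
      show "\<pi>ref a * ln (\<pi>ref a / P u a) = \<pi>ref a * (ln (\<pi>ref a) - ln (P u a))"
        using Ppos[of u a] pos[rule_format, of a] by (simp add: ln_div)
    qed simp
    then show ?thesis unfolding G_def J_pos[OF allI[OF Ppos]] by (simp add: mult.commute)
  qed
  have dln: "DERIV (\<lambda>u. ln (P u a)) u :> Pd u a / P u a" for u a
    using DERIV_chain2[OF DERIV_ln_divide[OF Ppos[of u a]] dP[of a u]] by simp
  have dG0: "DERIV G u :> (\<Sum>a\<in>UNIV. r a * Pd u a) - (1/\<eta>) * (\<Sum>a\<in>UNIV. \<pi>ref a * (0 - Pd u a / P u a))" for u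
    unfolding G_def[abs_def] by (intro DERIV_diff DERIV_sum DERIV_cmult DERIV_const dP dln)
  have Geq: "(\<Sum>a\<in>UNIV. r a * Pd u a) - (1/\<eta>) * (\<Sum>a\<in>UNIV. \<pi>ref a * (0 - Pd u a / P u a)) = - u * V u" for u
  proof -
    have pw: "r a * Pd u a - (1/\<eta>) * (\<pi>ref a * (0 - Pd u a / P u a)) = lam u * Pd u a - u * (d a * Pd u a)" for a
    proof -
      have "(1/\<eta>) * (\<pi>ref a * (0 - Pd u a / P u a)) = - (\<pi>ref a / (\<eta> * P u a)) * Pd u a" by simp
      then show ?thesis unfolding X by (simp add: algebra_simps)
    qed
    have "(\<Sum>a\<in>UNIV. r a * Pd u a) - (1/\<eta>) * (\<Sum>a\<in>UNIV. \<pi>ref a * (0 - Pd u a / P u a))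
        = (\<Sum>a\<in>UNIV. r a * Pd u a - (1/\<eta>) * (\<pi>ref a * (0 - Pd u a / P u a)))"
      by (simp only: sum_subtractf sum_distrib_left)
    also have "\<dots> = (\<Sum>a\<in>UNIV. lam u * Pd u a - u * (d a * Pd u a))" using pw by simp
    also have "\<dots> = lam u * (\<Sum>a\<in>UNIV. Pd u a) - u * V u" unfolding V_def by (simp add: sum_subtractf sum_distrib_left)
    finally show ?thesis using sPd[of u] by simp
  qed
  have dG: "DERIV G u :> - u * V u" for u using dG0[of u] unfolding Geq .
  define S where "S = G 0 - G 1"
  define K where "K u = G u + S * u ^ 2" for u
  have dK: "DERIV K x :> - x * V x + S * (2 * x)" for x
    unfolding K_def[abs_def] by (rule DERIV_add[OF dG]) (auto intro!: derivative_eq_intros)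
  obtain z where z: "0 < z" "z < 1" "K 1 - K 0 = (1 - 0) * (- z * V z + S * (2 * z))"
    using MVT2[of 0 1 K "\<lambda>x. - x * V x + S * (2 * x)"] dK by auto
  have "K 1 - K 0 = 0" unfolding K_def S_def by simp
  then have "z * (2 * S - V z) = 0" using z(3) by (simp add: algebra_simps)
  then have SV: "S = V z / 2" using z(1) by simp
  have P0: "opt_policy \<eta> \<pi>ref r = P 0" unfolding P_def f_def by simp
  have P1: "\<pi>hat = P 1"
  proof -
    have "f 1 = rhat" unfolding f_def by simp
    then show ?thesis using lam a6 by metis
  qed
  have Sub: "SubOpt \<eta> \<pi>ref r \<pi>hat = ereal S" unfolding SubOpt_def P0 P1 JG S_def by simp
  define p where "p = P z"
  define A where "A = (\<Sum>a\<in>UNIV. p a * (p a / \<pi>ref a * (r a - rhat a)^2))"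
  define B where "B = (\<Sum>a\<in>UNIV. p a ^ 2 / \<pi>ref a * (r a - rhat a))"
  define C where "C = (\<Sum>a\<in>UNIV. p a ^ 2 / \<pi>ref a)"
  have Cpos: "C > 0" unfolding C_def p_def
  proof (intro sum_pos)
    fix i
    show "0 < P z i ^ 2 / \<pi>ref i" using Ppos[of z i] pos[rule_format, of i] by simp
  qed auto
  have hA: "(\<Sum>a\<in>UNIV. w z a * d a * d a) = \<eta> * A"
    unfolding A_def sum_distrib_left
  proof (rule sum.cong)
    fix x
    show "w z x * d x * d x = \<eta> * (p x * (p x / \<pi>ref x * (r x - rhat x)^2))"
      unfolding w_def p_def d_def using pos[rule_format, of x] by (intro aux_A) simp
  qed simp
  have hB: "(\<Sum>a\<in>UNIV. w z a * d a) = - (\<eta> * B)"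
    unfolding B_def sum_distrib_left sum_negf[symmetric]
  proof (rule sum.cong)
    fix x
    show "w z x * d x = - (\<eta> * (p x ^ 2 / \<pi>ref x * (r x - rhat x)))"
      unfolding w_def p_def d_def using pos[rule_format, of x] by (intro aux_B) simp
  qed simp
  have hC: "(\<Sum>a\<in>UNIV. w z a) = \<eta> * C"
    unfolding C_def sum_distrib_left
    by (rule sum.cong) (simp_all add: w_def p_def)
  have VV: "V z = (\<Sum>a\<in>UNIV. w z a * d a * d a) - L z * (\<Sum>a\<in>UNIV. w z a * d a)"
    unfolding V_def Pd_def by (simp add: algebra_simps sum_subtractf sum_distrib_left)
  have Vz: "V z = \<eta> * (A - B ^ 2 / C)"
    unfolding VV hA unfolding L_def hB hC using eta Cpos by (simp add: field_simps power2_eq_square)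
  have eq: "S = \<eta> / 2 * (A - B ^ 2 / C)" using SV Vz by simp
  have le: "\<eta> / 2 * (A - B ^ 2 / C) \<le> \<eta> / 2 * A"
    using eta Cpos by (intro mult_left_mono) auto
  show ?thesis
  proof (rule bexI[of _ z])
    show "z \<in> {0..1}" using z by auto
    show "let p = opt_policy \<eta> \<pi>ref (\<lambda>a. (1 - z) * r a + z * rhat a) in
      SubOpt \<eta> \<pi>ref r \<pi>hat =
        ereal (\<eta> / 2 * ((\<Sum>a\<in>UNIV. p a * (p a / \<pi>ref a * (r a - rhat a)^2))
          - (\<Sum>a\<in>UNIV. p a ^ 2 / \<pi>ref a * (r a - rhat a))^2
            / (\<Sum>a\<in>UNIV. p a ^ 2 / \<pi>ref a)))
      \<and> SubOpt \<eta> \<pi>ref r \<pi>hat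
          \<le> ereal (\<eta> / 2 * (\<Sum>a\<in>UNIV. p a * (p a / \<pi>ref a * (r a - rhat a)^2)))"
      unfolding Let_def Sub
      using eq le unfolding A_def B_def C_def p_def P_def f_def by simp
  qed
qed

end
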